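(* Let $\mathcal{D} \in \mathsf{PLL}_2^\infty$ be finitely expandable. If $\mathcal{D}$ is weakly progressing then any infinite branch contains the main branch of a non-wellfounded box. Moreover, $\mathcal{D}$ is progressing if and only if $\mathcal{D}$ is weakly progressing.
   Context: Formulas: $A ::= X \mid X^\perp \mid A\otimes A \mid A ⅋ A \mid {!A} \mid {?A} \mid \mathbf{1} \mid \bot \mid \forall X.A \mid \exists X.A$. $\mathsf{PLL}_2^\infty$ is the set of possibly infinite coderivations over axiom, cut, $\otimes$, $⅋$, $\mathbf{1}$, $\bot$, weakening $?\mathsf{w}$ (from $\Gamma$ infer $\Gamma,?A$), absorption $?\mathsf{b}$ (from $\Gamma,A,?A$ infer $\Gamma,?A$), $\forall$, $\exists$ (instantiating only $(!,?)$-free formulas), and conditional promotion $\mathsf{cp}$ (from left premise $\Gamma,A$ and right premise $?\Gamma,!A$ infer $?\Gamma,!A$). A coderivation is finitely expandable if every branch contains finitely many cut and $?\mathsf{b}$ rules; weakly progressing if every infinite branch contains infinitely many right premises of $\mathsf{cp}$ rules; progressing if every infinite branch contains a $!$-thread (maximal upward sequence of $!$-formula occurrences linked by the parent relation) which is infinitely often in the conclusion of a $\mathsf{cp}$ rule. A non-wellfounded box is a coderivation whose infinite rightmost branch $\{\epsilon,2,22,\dots\}$ (its main branch) consists of conclusions of $\mathsf{cp}$ rules. *)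

theory Defs
  imports Main
begin

section \<open>Formulas of second-order linear logic (de Bruijn indices for variables)\<close>

datatype fm =
    Var nat
  | NVar nat
  | Tens fm fm
  | Par fm fm
  | Bang fm
  | Why fm
  | One
  | Bot
  | All fm           (* forall X. A, X bound = index 0 *)
  | Ex fm

fun dual :: "fm \<Rightarrow> fm" where
  "dual (Var n) = NVar n"
| "dual (NVar n) = Var n"
| "dual (Tens A B) = Par (dual A) (dual B)"
| "dual (Par A B) = Tens (dual A) (dual B)"
| "dual (Bang A) = Why (dual A)"
| "dual (Why A) = Bang (dual A)"
| "dual One = Bot"
| "dual Bot = One"
| "dual (All A) = Ex (dual A)"
| "dual (Ex A) = All (dual A)"

fun lift :: "nat \<Rightarrow> fm \<Rightarrow> fm" where
  "lift c (Var n) = Var (if n < c then n else Suc n)"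
| "lift c (NVar n) = NVar (if n < c then n else Suc n)"
| "lift c (Tens A B) = Tens (lift c A) (lift c B)"
| "lift c (Par A B) = Par (lift c A) (lift c B)"
| "lift c (Bang A) = Bang (lift c A)"
| "lift c (Why A) = Why (lift c A)"
| "lift c One = One"
| "lift c Bot = Bot"
| "lift c (All A) = All (lift (Suc c) A)"
| "lift c (Ex A) = Ex (lift (Suc c) A)"

fun subst :: "nat \<Rightarrow> fm \<Rightarrow> fm \<Rightarrow> fm" where
  "subst k B (Var n) = (if n = k then B else if k < n then Var (n - 1) else Var n)"
| "subst k B (NVar n) = (if n = k then dual B else if k < n then NVar (n - 1) else NVar n)"
| "subst k B (Tens A C) = Tens (subst k B A) (subst k B C)"
| "subst k B (Par A C) = Par (subst k B A) (subst k B C)"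
| "subst k B (Bang A) = Bang (subst k B A)"
| "subst k B (Why A) = Why (subst k B A)"
| "subst k B One = One"
| "subst k B Bot = Bot"
| "subst k B (All A) = All (subst (Suc k) (lift 0 B) A)"
| "subst k B (Ex A) = Ex (subst (Suc k) (lift 0 B) A)"

fun exp_free :: "fm \<Rightarrow> bool" where
  "exp_free (Tens A B) = (exp_free A \<and> exp_free B)"
| "exp_free (Par A B) = (exp_free A \<and> exp_free B)"
| "exp_free (Bang A) = False"
| "exp_free (Why A) = False"
| "exp_free (All A) = exp_free A"
| "exp_free (Ex A) = exp_free A"
| "exp_free _ = True"

fun is_bang :: "fm \<Rightarrow> bool" where
  "is_bang (Bang A) = True"
| "is_bang _ = False"

fun is_why :: "fm \<Rightarrow> bool" where
  "is_why (Why A) = True"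
| "is_why _ = False"

fun unwhy :: "fm \<Rightarrow> fm" where
  "unwhy (Why A) = A"
| "unwhy A = A"

definition del :: "nat \<Rightarrow> 'a list \<Rightarrow> 'a list" where
  "del i xs = take i xs @ drop (Suc i) xs"

definition ctxmap :: "nat \<Rightarrow> nat \<Rightarrow> nat" where
  "ctxmap i j = (if j < i then j else Suc j)"

definition sel_idxs :: "bool list \<Rightarrow> nat list" where
  "sel_idxs bs = filter (\<lambda>k. bs ! k) [0..<length bs]"

definition sel :: "bool list \<Rightarrow> 'a list \<Rightarrow> 'a list" where
  "sel bs xs = map (\<lambda>k. xs ! k) (sel_idxs bs)"

text \<open>The integer i is the position of the principal formula in the conclusion;
  bool lists bs describe how the context is split between the two premises.\<close>
datatype rule =
    RAx
  | RCut "bool list" fm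
  | RTensor nat "bool list"
  | RPar nat
  | ROne
  | RBot nat
  | RWeak nat
  | RAbs nat
  | RAll nat
  | REx nat fm
  | RCp nat

fun arity :: "rule \<Rightarrow> nat" where
  "arity RAx = 0"
| "arity ROne = 0"
| "arity (RCut bs C) = 2"
| "arity (RTensor i bs) = 2"
| "arity (RCp i) = 2"
| "arity _ = 1"

fun is_cp :: "rule \<Rightarrow> bool" where
  "is_cp (RCp i) = True"
| "is_cp _ = False"

fun is_cut_or_abs :: "rule \<Rightarrow> bool" where
  "is_cut_or_abs (RCut bs C) = True"
| "is_cut_or_abs (RAbs i) = True"
| "is_cut_or_abs _ = False"

fun valid_step :: "rule \<Rightarrow> fm list \<Rightarrow> fm list list \<Rightarrow> bool" where
  "valid_step RAx G Ps = ((\<exists>A. G = [A, dual A]) \<and> Ps = [])"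
| "valid_step (RCut bs C) G Ps =
     (length bs = length G \<and> Ps = [sel bs G @ [C], sel (map Not bs) G @ [dual C]])"
| "valid_step (RTensor i bs) G Ps =
     (i < length G \<and> length bs = length G - 1 \<and>
      (\<exists>A B. G ! i = Tens A B \<and>
         Ps = [sel bs (del i G) @ [A], sel (map Not bs) (del i G) @ [B]]))"
| "valid_step (RPar i) G Ps =
     (i < length G \<and> (\<exists>A B. G ! i = Par A B \<and> Ps = [del i G @ [A, B]]))"
| "valid_step ROne G Ps = (G = [One] \<and> Ps = [])"
| "valid_step (RBot i) G Ps = (i < length G \<and> G ! i = Bot \<and> Ps = [del i G])"
| "valid_step (RWeak i) G Ps =
     (i < length G \<and> (\<exists>A. G ! i = Why A) \<and> Ps = [del i G])"
| "valid_step (RAbs i) G Ps =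
     (i < length G \<and> (\<exists>A. G ! i = Why A \<and> Ps = [del i G @ [A, Why A]]))"
| "valid_step (RAll i) G Ps =
     (i < length G \<and> (\<exists>A. G ! i = All A \<and> Ps = [map (lift 0) (del i G) @ [A]]))"
| "valid_step (REx i B) G Ps =
     (i < length G \<and> exp_free B \<and>
      (\<exists>A. G ! i = Ex A \<and> Ps = [del i G @ [subst 0 B A]]))"
| "valid_step (RCp i) G Ps =
     (i < length G \<and> (\<forall>C\<in>set (del i G). is_why C) \<and>
      (\<exists>A. G ! i = Bang A \<and> Ps = [map unwhy (del i G) @ [A], G]))"

text \<open>Parent relation: parent r n k j = Some m means that the occurrence at position j
  of premise k (1 = left/only, 2 = right) of rule r with a conclusion of length n
  has as parent the occurrence at position m of the conclusion.\<close>
fun parent :: "rule \<Rightarrow> nat \<Rightarrow> nat \<Rightarrow> nat \<Rightarrow> nat option" where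
  "parent RAx n k j = None"
| "parent ROne n k j = None"
| "parent (RCut bs C) n k j =
     (let bs' = (if k = 1 then bs else map Not bs); L = length (sel_idxs bs') in
      if k \<in> {1, 2} \<and> j < L then Some (sel_idxs bs' ! j) else None)"
| "parent (RTensor i bs) n k j =
     (let bs' = (if k = 1 then bs else map Not bs); L = length (sel_idxs bs') in
      if k \<in> {1, 2} \<and> j < L then Some (ctxmap i (sel_idxs bs' ! j))
      else if k \<in> {1, 2} \<and> j = L then Some i else None)"
| "parent (RPar i) n k j =
     (if k = 1 \<and> j < n - 1 then Some (ctxmap i j)
      else if k = 1 \<and> j \<in> {n - 1, n} then Some i else None)"
| "parent (RBot i) n k j = (if k = 1 \<and> j < n - 1 then Some (ctxmap i j) else None)"
| "parent (RWeak i) n k j = (if k = 1 \<and> j < n - 1 then Some (ctxmap i j) else None)"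
| "parent (RAbs i) n k j =
     (if k = 1 \<and> j < n - 1 then Some (ctxmap i j)
      else if k = 1 \<and> j \<in> {n - 1, n} then Some i else None)"
| "parent (RAll i) n k j =
     (if k = 1 \<and> j < n - 1 then Some (ctxmap i j)
      else if k = 1 \<and> j = n - 1 then Some i else None)"
| "parent (REx i B) n k j =
     (if k = 1 \<and> j < n - 1 then Some (ctxmap i j)
      else if k = 1 \<and> j = n - 1 then Some i else None)"
| "parent (RCp i) n k j =
     (if k = 1 \<and> j < n - 1 then Some (ctxmap i j)
      else if k = 1 \<and> j = n - 1 then Some i
      else if k = 2 \<and> j < n then Some j else None)"

text \<open>A (possibly infinite) coderivation is a labelling of addresses (words over {1,2})
  by a sequent and a rule; the children of w are w@[1] and w@[2]
  (w@[2] being the right premise of a binary rule).\<close>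
type_synonym coder = "nat list \<Rightarrow> fm list \<times> rule"

definition seqt :: "coder \<Rightarrow> nat list \<Rightarrow> fm list" where
  "seqt D w = fst (D w)"

definition rl :: "coder \<Rightarrow> nat list \<Rightarrow> rule" where
  "rl D w = snd (D w)"

inductive_set pos :: "coder \<Rightarrow> nat list set" for D where
  root: "[] \<in> pos D"
| child: "w \<in> pos D \<Longrightarrow> 1 \<le> k \<Longrightarrow> k \<le> arity (rl D w) \<Longrightarrow> w @ [k] \<in> pos D"

definition coderivation :: "coder \<Rightarrow> bool" where
  "coderivation D \<longleftrightarrow>
     (\<forall>w\<in>pos D. valid_step (rl D w) (seqt D w)
                   (map (\<lambda>k. seqt D (w @ [k])) [1..<Suc (arity (rl D w))]))"

definition inf_branch :: "coder \<Rightarrow> (nat \<Rightarrow> nat list) \<Rightarrow> bool" where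
  "inf_branch D b \<longleftrightarrow> b 0 = [] \<and>
     (\<forall>n. \<exists>k. 1 \<le> k \<and> k \<le> arity (rl D (b n)) \<and> b (Suc n) = b n @ [k])"

definition finitely_expandable :: "coder \<Rightarrow> bool" where
  "finitely_expandable D \<longleftrightarrow>
     (\<forall>b. inf_branch D b \<longrightarrow> finite {n. is_cut_or_abs (rl D (b n))})"

definition weakly_progressing :: "coder \<Rightarrow> bool" where
  "weakly_progressing D \<longleftrightarrow>
     (\<forall>b. inf_branch D b \<longrightarrow>
        infinite {n. is_cp (rl D (b n)) \<and> b (Suc n) = b n @ [2]})"

text \<open>A !-thread along the branch b: starting at step n0, occurrence positions j n,
  all !-formulas, each the parent of the next; maximal (cannot be extended downwards).\<close>
definition bang_thread :: "coder \<Rightarrow> (nat \<Rightarrow> nat list) \<Rightarrow> nat \<Rightarrow> (nat \<Rightarrow> nat) \<Rightarrow> bool" where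
  "bang_thread D b n0 j \<longleftrightarrow>
     (\<forall>n\<ge>n0. j n < length (seqt D (b n)) \<and> is_bang (seqt D (b n) ! j n) \<and>
        parent (rl D (b n)) (length (seqt D (b n))) (last (b (Suc n))) (j (Suc n)) = Some (j n))
     \<and> (n0 = 0 \<or>
        (\<forall>m. parent (rl D (b (n0 - 1))) (length (seqt D (b (n0 - 1)))) (last (b n0)) (j n0) = Some m
             \<longrightarrow> \<not> (m < length (seqt D (b (n0 - 1))) \<and> is_bang (seqt D (b (n0 - 1)) ! m))))"

definition progressing :: "coder \<Rightarrow> bool" where
  "progressing D \<longleftrightarrow>
     (\<forall>b. inf_branch D b \<longrightarrow>
        (\<exists>n0 j. bang_thread D b n0 j \<and> infinite {n. n0 \<le> n \<and> is_cp (rl D (b n))}))"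

text \<open>The sub-coderivation rooted at v is a non-wellfounded box: its main branch
  v, v2, v22, ... consists of conclusions of cp rules.\<close>
definition nwf_box_at :: "coder \<Rightarrow> nat list \<Rightarrow> bool" where
  "nwf_box_at D v \<longleftrightarrow> (\<forall>m. is_cp (rl D (v @ replicate m 2)))"

end

theory Submission
  imports Defs
begin

fun mc :: "fm \<Rightarrow> nat" where
  "mc (Tens A B) = mc A + mc B"
| "mc (Par A B) = mc A + mc B"
| "mc (Bang A) = Suc (mc A)"
| "mc (Why A) = Suc (mc A)"
| "mc (All A) = mc A"
| "mc (Ex A) = mc A"
| "mc _ = 0"

lemma mc_lift[simp]: "mc (lift c A) = mc A"
  by (induct A arbitrary: c) auto

lemma size_lift[simp]: "size (lift c A) = size A"
  by (induct A arbitrary: c) auto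

lemma mc_dual[simp]: "mc (dual A) = mc A"
  by (induct A) auto

lemma ef_dual: "exp_free B \<Longrightarrow> exp_free (dual B)"
  by (induct B) auto

lemma ef_mc: "exp_free B \<Longrightarrow> mc B = 0"
  by (induct B) auto

lemma ef_lift: "exp_free B \<Longrightarrow> exp_free (lift c B)"
  by (induct B arbitrary: c) auto

lemma mc_subst: "exp_free B \<Longrightarrow> mc (subst k B A) = mc A"
  by (induct A arbitrary: k B) (auto simp: ef_mc ef_dual ef_lift)

definition M :: "fm list \<Rightarrow> nat" where "M G = sum_list (map mc G)"

lemma length_del[simp]: "i < length G \<Longrightarrow> length (del i G) = length G - 1"
  by (auto simp: del_def)

lemma sum_del: "i < length G \<Longrightarrow> sum_list (map f G) = sum_list (map f (del i G)) + (f (G!i) :: nat)"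
proof -
  assume i: "i < length G"
  have "G = take i G @ G!i # drop (Suc i) G" using i by (simp add: id_take_nth_drop)
  then have "sum_list (map f G) = sum_list (map f (take i G @ G!i # drop (Suc i) G))" by simp
  then show ?thesis by (simp add: del_def)
qed

lemma del_nth: "i < length G \<Longrightarrow> k < length G - 1 \<Longrightarrow> del i G ! k = G ! ctxmap i k"
  by (auto simp: del_def ctxmap_def nth_append min_def)

lemma sel_idxs_lt: "x \<in> set (sel_idxs bs) \<Longrightarrow> x < length bs"
  by (auto simp: sel_idxs_def)

lemma length_sel[simp]: "length (sel bs xs) = length (sel_idxs bs)"
  by (simp add: sel_def)

lemma sel_nth: "j < length (sel_idxs bs) \<Longrightarrow> sel bs xs ! j = xs ! (sel_idxs bs ! j)"
  by (simp add: sel_def)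

lemma sum_sel: "length bs = length xs \<Longrightarrow> sum_list (map f (sel bs xs)) \<le> (sum_list (map f xs) :: nat)"
proof -
  assume l: "length bs = length xs"
  have d: "distinct (sel_idxs bs)" by (simp add: sel_idxs_def)
  have "sum_list (map f (sel bs xs)) = sum_list (map (\<lambda>k. f (xs ! k)) (sel_idxs bs))"
    by (simp add: sel_def comp_def)
  also have "\<dots> = (\<Sum>k\<in>set (sel_idxs bs). f (xs ! k))"
    using d by (simp add: sum_list_distinct_conv_sum_set)
  also have "\<dots> \<le> (\<Sum>k\<in>{0..<length xs}. f (xs ! k))"
    apply (rule sum_mono2) using sel_idxs_lt[of _ bs] l by auto
  also have "\<dots> = sum_list (map f xs)"
    by (metis (no_types) length_map nth_map sum_list_sum_nth sum.cong atLeastLessThan_iff)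
  finally show ?thesis .
qed

lemma sel_M: "length bs = length xs \<Longrightarrow> M (sel bs xs) \<le> M xs"
  unfolding M_def by (rule sum_sel)

lemma M_app[simp]: "M (xs @ ys) = M xs + M ys" by (simp add: M_def)
lemma M_cons[simp]: "M (x # ys) = mc x + M ys" by (simp add: M_def)
lemma M_nil[simp]: "M [] = 0" by (simp add: M_def)

lemma M_del: "i < length G \<Longrightarrow> M G = M (del i G) + mc (G!i)"
  unfolding M_def by (rule sum_del)

lemma M_lift[simp]: "M (map (lift c) G) = M G"
  by (induct G) auto

lemma M_unwhy: "\<forall>C\<in>set G. is_why C \<Longrightarrow> M (map unwhy G) + length G = M G"
proof (induct G)
  case (Cons a G) then show ?case by (cases a) auto
qed simp

lemma M_step:
  assumes v: "valid_step r G Ps" and nc: "\<not> is_cut_or_abs r" and k: "1 \<le> k" "k \<le> arity r"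
  shows "M (Ps!(k-1)) \<le> M G \<and> ((\<exists>i. r = RWeak i) \<or> (is_cp r \<and> k = 1) \<longrightarrow> M (Ps!(k-1)) < M G)"
proof (cases r)
  case (RTensor i bs)
  then obtain A B where i: "i < length G" and l: "length bs = length G - 1" and
    g: "G ! i = Tens A B" and P: "Ps = [sel bs (del i G) @ [A], sel (map Not bs) (del i G) @ [B]]"
    using v by auto
  have e: "M G = M (del i G) + mc A + mc B" using M_del[OF i] g by simp
  have "M (sel bs (del i G)) \<le> M (del i G)" "M (sel (map Not bs) (del i G)) \<le> M (del i G)"
    using sel_M l i by auto
  then show ?thesis using k RTensor P e by (cases k; cases "k - 1") auto
next
  case (RPar i)
  then obtain A B where i: "i < length G" and g: "G ! i = Par A B" and P: "Ps = [del i G @ [A, B]]"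
    using v by auto
  show ?thesis using k RPar P M_del[OF i] g by (cases k) auto
next
  case (RBot i)
  then show ?thesis using k v M_del[of i G] by (cases k) auto
next
  case (RWeak i)
  then obtain A where i: "i < length G" and g: "G ! i = Why A" and P: "Ps = [del i G]"
    using v by auto
  show ?thesis using k RWeak P M_del[OF i] g by (cases k) auto
next
  case (RAll i)
  then obtain A where i: "i < length G" and g: "G ! i = All A" and P: "Ps = [map (lift 0) (del i G) @ [A]]"
    using v by auto
  show ?thesis using k RAll P M_del[OF i] g by (cases k) auto
next
  case (REx i B)
  then obtain A where i: "i < length G" and ef: "exp_free B" and g: "G ! i = Ex A" and P: "Ps = [del i G @ [subst 0 B A]]"
    using v by auto
  show ?thesis using k REx P M_del[OF i] g mc_subst[OF ef] by (cases k) auto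
next
  case (RCp i)
  then obtain A where i: "i < length G" and w: "\<forall>C\<in>set (del i G). is_why C" and g: "G ! i = Bang A"
    and P: "Ps = [map unwhy (del i G) @ [A], G]"
    using v by auto
  have "M (map unwhy (del i G)) \<le> M (del i G)" using M_unwhy[OF w] by linarith
  then show ?thesis using k RCp P M_del[OF i] g by (cases k; cases "k - 1") auto
qed (use nc k in auto)


lemma size_step:
  assumes v: "valid_step r G Ps" and k: "1 \<le> k" "k \<le> arity r"
    and j: "j < length (Ps!(k-1))" and p: "parent r (length G) k j = Some m"
    and bg: "is_bang (G!m)"
  shows "size (Ps!(k-1)!j) \<le> size (G!m) \<and> (is_cp r \<and> k = 1 \<longrightarrow> size (Ps!(k-1)!j) < size (G!m))"
proof (cases r)
  case (RCut bs C)
  then have l: "length bs = length G" and P: "Ps = [sel bs G @ [C], sel (map Not bs) G @ [dual C]]"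
    using v by auto
  show ?thesis
  proof (cases "k = 1")
    case True
    then show ?thesis using p j P RCut by (auto simp: nth_append sel_nth Let_def split: if_splits)
  next
    case False
    then have "k = 2" using k RCut by auto
    then show ?thesis using p j P RCut by (auto simp: nth_append sel_nth Let_def split: if_splits)
  qed
next
  case (RTensor i bs)
  then obtain A B where i: "i < length G" and l: "length bs = length G - 1" and
    g: "G ! i = Tens A B" and P: "Ps = [sel bs (del i G) @ [A], sel (map Not bs) (del i G) @ [B]]"
    using v by auto
  show ?thesis
  proof (cases "k = 1")
    case True
    then show ?thesis using p j P RTensor g bg i l sel_idxs_lt[of _ bs]
      by (auto simp: nth_append sel_nth Let_def del_nth split: if_splits)
  next
    case False
    then have "k = 2" using k RTensor by auto
    then show ?thesis using p j P RTensor g bg i l sel_idxs_lt[of _ "map Not bs"]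
      by (auto simp: nth_append sel_nth Let_def del_nth split: if_splits)
  qed
next
  case (RPar i)
  then obtain A B where i: "i < length G" and g: "G ! i = Par A B" and P: "Ps = [del i G @ [A, B]]"
    using v by auto
  show ?thesis using k RPar P g bg i p j by (auto simp: nth_append del_nth split: if_splits)
next
  case (RBot i)
  then show ?thesis using k v p j by (auto simp: nth_append del_nth split: if_splits)
next
  case (RWeak i)
  then show ?thesis using k v p j by (auto simp: nth_append del_nth split: if_splits)
next
  case (RAbs i)
  then obtain A where i: "i < length G" and g: "G ! i = Why A" and P: "Ps = [del i G @ [A, Why A]]"
    using v by auto
  show ?thesis using k RAbs P g bg i p j by (auto simp: nth_append del_nth split: if_splits)
next
  case (RAll i)
  then obtain A where i: "i < length G" and g: "G ! i = All A" and P: "Ps = [map (lift 0) (del i G) @ [A]]"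
    using v by auto
  show ?thesis using k RAll P g bg i p j by (auto simp: nth_append del_nth split: if_splits)
next
  case (REx i B)
  then obtain A where i: "i < length G" and g: "G ! i = Ex A" and P: "Ps = [del i G @ [subst 0 B A]]"
    using v by auto
  show ?thesis using k REx P g bg i p j by (auto simp: nth_append del_nth split: if_splits)
next
  case (RCp i)
  then obtain A where i: "i < length G" and w: "\<forall>C\<in>set (del i G). is_why C" and g: "G ! i = Bang A"
    and P: "Ps = [map unwhy (del i G) @ [A], G]"
    using v by auto
  show ?thesis
  proof (cases "k = 1")
    case True
    show ?thesis
    proof (cases "j < length G - 1")
      case True
      then have "del i G ! j \<in> set (del i G)" using i by simp
      then have "is_why (G ! ctxmap i j)" using w del_nth[OF i True] by simp
      moreover have "m = ctxmap i j" using p True \<open>k = 1\<close> RCp by auto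
      ultimately show ?thesis using bg by (cases "G!m") auto
    next
      case False
      then have "j = length G - 1" using j P \<open>k = 1\<close> i by auto
      then show ?thesis using p P \<open>k = 1\<close> RCp g i by (auto simp: nth_append)
    qed
  next
    case False
    then have "k = 2" using k RCp by auto
    then show ?thesis using p j P RCp by (auto split: if_splits)
  qed
qed (use k in auto)


lemma fin_decr:
  fixes f :: "nat \<Rightarrow> nat"
  assumes mono: "\<forall>n\<ge>N. f (Suc n) \<le> f n" and str: "\<forall>n\<ge>N. P n \<longrightarrow> f (Suc n) < f n"
  shows "finite {n. N \<le> n \<and> P n}"
proof (rule ccontr)
  have cl: "f (N + k) + card {n. N \<le> n \<and> n < N + k \<and> P n} \<le> f N" for k
  proof (induct k)
    case 0 then show ?case by simp
  next
    case (Suc k)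
    let ?S = "{n. N \<le> n \<and> n < N + k \<and> P n}"
    have fin: "finite ?S" by (rule finite_subset[of _ "{..<N+k}"]) auto
    show ?case
    proof (cases "P (N + k)")
      case True
      have e: "{n. N \<le> n \<and> n < N + Suc k \<and> P n} = insert (N + k) ?S" using True by auto
      have "card (insert (N + k) ?S) = Suc (card ?S)" using fin by simp
      have "f (N + Suc k) < f (N + k)" using str True by simp
      then show ?thesis using Suc e \<open>card (insert (N + k) ?S) = Suc (card ?S)\<close> by simp
    next
      case False
      have e: "{n. N \<le> n \<and> n < N + Suc k \<and> P n} = ?S" using False less_Suc_eq by auto
      have "f (N + Suc k) \<le> f (N + k)" using mono by simp
      then show ?thesis using Suc e by simp
    qed
  qed
  assume inf: "infinite {n. N \<le> n \<and> P n}"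
  then obtain B where B: "B \<subseteq> {n. N \<le> n \<and> P n}" "finite B" "card B = Suc (f N)"
    using infinite_arbitrarily_large by blast
  have "B \<subseteq> {n. N \<le> n \<and> n < N + Suc (Max B) \<and> P n}"
  proof
    fix x assume x: "x \<in> B"
    then have "x \<le> Max B" using Max_ge[OF B(2)] by blast
    then show "x \<in> {n. N \<le> n \<and> n < N + Suc (Max B) \<and> P n}" using B(1) x by auto
  qed
  then have "card B \<le> card {n. N \<le> n \<and> n < N + Suc (Max B) \<and> P n}"
    by (rule card_mono[rotated]) (rule finite_subset[of _ "{..<N + Suc (Max B)}"], auto)
  then show False using cl[of "Suc (Max B)"] B(3) by linarith
qed

lemma branch_pos: "inf_branch D b \<Longrightarrow> b n \<in> pos D"
proof (induct n)
  case 0 then show ?case by (simp add: inf_branch_def pos.root)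
next
  case (Suc n)
  then obtain k where "1 \<le> k" "k \<le> arity (rl D (b n))" "b (Suc n) = b n @ [k]"
    unfolding inf_branch_def by blast
  then show ?case using Suc pos.child by metis
qed

lemma branch_step:
  assumes c: "coderivation D" and b: "inf_branch D b"
  shows "\<exists>k Ps. 1 \<le> k \<and> k \<le> arity (rl D (b n)) \<and> b (Suc n) = b n @ [k] \<and>
     valid_step (rl D (b n)) (seqt D (b n)) Ps \<and> Ps!(k-1) = seqt D (b (Suc n))"
proof -
  obtain k where k: "1 \<le> k" "k \<le> arity (rl D (b n))" "b (Suc n) = b n @ [k]"
    using b unfolding inf_branch_def by blast
  let ?Ps = "map (\<lambda>k. seqt D (b n @ [k])) [1..<Suc (arity (rl D (b n)))]"
  have vs: "valid_step (rl D (b n)) (seqt D (b n)) ?Ps"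
    using c branch_pos[OF b] unfolding coderivation_def by blast
  have u: "[1..<Suc (arity (rl D (b n)))] ! (k-1) = k" using k by (subst nth_upt) auto
  have "?Ps!(k-1) = seqt D (b (Suc n))" using k u by (simp del: upt_Suc)
  then show ?thesis using k vs by blast
qed

lemma set_del: "i < length G \<Longrightarrow> x \<in> set G \<Longrightarrow> x = G!i \<or> x \<in> set (del i G)"
  by (metis Un_iff del_def id_take_nth_drop insert_iff list.simps(15) set_append)

lemma shape:
  assumes "valid_step r G Ps" "\<forall>x\<in>set G. is_why x \<or> is_bang x" "\<not> is_cut_or_abs r" "1 \<le> arity r"
  shows "(\<exists>i. r = RWeak i) \<or> is_cp r"
proof -
  have h: "\<forall>i<length G. is_why (G!i) \<or> is_bang (G!i)" using assms(2) by auto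
  show ?thesis using assms(1,3,4) h by (cases r) fastforce+
qed


lemma inf_unb: "infinite (S::nat set) \<Longrightarrow> \<exists>n\<in>S. n \<ge> m"
  by (meson finite_nat_set_iff_bounded not_le)

lemma wp_box:
  assumes c: "coderivation D" and fe: "finitely_expandable D" and wp: "weakly_progressing D"
    and b: "inf_branch D b"
  shows "\<exists>n1. \<forall>m. is_cp (rl D (b (n1+m))) \<and> b (Suc (n1+m)) = b (n1+m) @ [2]
              \<and> seqt D (b (n1+m)) = seqt D (b n1)"
proof -
  have "finite {n. is_cut_or_abs (rl D (b n))}" using fe b unfolding finitely_expandable_def by blast
  then obtain N where "{n. is_cut_or_abs (rl D (b n))} \<subseteq> {..<N}" using finite_nat_set_iff_bounded by (metis lessThan_iff subsetI)
  then have N: "\<forall>n\<ge>N. \<not> is_cut_or_abs (rl D (b n))" by auto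
  define f where "f n = M (seqt D (b n))" for n
  define P where "P n = ((\<exists>i. rl D (b n) = RWeak i) \<or> (is_cp (rl D (b n)) \<and> b (Suc n) = b n @ [1]))" for n
  have st: "f (Suc n) \<le> f n \<and> (P n \<longrightarrow> f (Suc n) < f n)" if "n \<ge> N" for n
  proof -
    obtain k Ps where k: "1 \<le> k" "k \<le> arity (rl D (b n))" "b (Suc n) = b n @ [k]"
      "valid_step (rl D (b n)) (seqt D (b n)) Ps" "Ps!(k-1) = seqt D (b (Suc n))"
      using branch_step[OF c b] by blast
    have "P n \<longleftrightarrow> (\<exists>i. rl D (b n) = RWeak i) \<or> (is_cp (rl D (b n)) \<and> k = 1)"
      using k(3) unfolding P_def by auto
    then show ?thesis using M_step[OF k(4) _ k(1,2)] N that k(5) unfolding f_def by auto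
  qed
  have "finite {n. N \<le> n \<and> P n}" by (rule fin_decr[where f=f]) (use st in auto)
  then obtain N2 where "{n. N \<le> n \<and> P n} \<subseteq> {..<N2}" using finite_nat_set_iff_bounded by (metis lessThan_iff subsetI)
  then have N2: "\<forall>n\<ge>N2. \<not> (N \<le> n \<and> P n)" by auto
  have "infinite {n. is_cp (rl D (b n)) \<and> b (Suc n) = b n @ [2]}"
    using wp b unfolding weakly_progressing_def by blast
  then obtain n1 where "n1 \<ge> max N N2" "n1 \<in> {n. is_cp (rl D (b n)) \<and> b (Suc n) = b n @ [2]}"
    using inf_unb by blast
  then have n1: "n1 \<ge> max N N2" "is_cp (rl D (b n1))" "b (Suc n1) = b n1 @ [2]" by auto
  define G where "G = seqt D (b n1)"
  have shG: "\<forall>x\<in>set G. is_why x \<or> is_bang x"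
  proof -
    obtain k Ps where k: "valid_step (rl D (b n1)) (seqt D (b n1)) Ps"
      using branch_step[OF c b] by blast
    obtain i where i: "rl D (b n1) = RCp i" using n1(2) by (cases "rl D (b n1)") auto
    then show ?thesis using k set_del unfolding G_def by fastforce
  qed
  have "is_cp (rl D (b (n1+m))) \<and> b (Suc (n1+m)) = b (n1+m) @ [2] \<and> seqt D (b (n1+m)) = G" for m
  proof (induct m)
    case 0 then show ?case using n1 G_def by simp
  next
    case (Suc m)
    obtain k Ps where k: "1 \<le> k" "k \<le> arity (rl D (b (n1+m)))" "b (Suc (n1+m)) = b (n1+m) @ [k]"
      "valid_step (rl D (b (n1+m))) (seqt D (b (n1+m))) Ps" "Ps!(k-1) = seqt D (b (Suc (n1+m)))"
      using branch_step[OF c b] by blast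
    have "k = 2" using k(3) Suc by simp
    obtain i where "rl D (b (n1+m)) = RCp i" using Suc by (cases "rl D (b (n1+m))") auto
    then have sG: "seqt D (b (n1 + Suc m)) = G" using k Suc \<open>k = 2\<close> by auto
    obtain k' Ps' where k': "1 \<le> k'" "k' \<le> arity (rl D (b (n1+Suc m)))" "b (Suc (n1+Suc m)) = b (n1+Suc m) @ [k']"
      "valid_step (rl D (b (n1+Suc m))) (seqt D (b (n1+Suc m))) Ps'"
      using branch_step[OF c b] by blast
    have nc: "\<not> is_cut_or_abs (rl D (b (n1+Suc m)))" using N n1 by auto
    have nP: "\<not> P (n1 + Suc m)" using N2 n1 by auto
    have "(\<exists>i. rl D (b (n1+Suc m)) = RWeak i) \<or> is_cp (rl D (b (n1+Suc m)))"
      using shape[OF k'(4)] sG shG nc k' by auto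
    then have cp: "is_cp (rl D (b (n1+Suc m)))" using nP unfolding P_def by auto
    then have "arity (rl D (b (n1+Suc m))) = 2" by (cases "rl D (b (n1+Suc m))") auto
    moreover have "k' \<noteq> 1" using nP cp k'(3) unfolding P_def by auto
    ultimately have "k' = 2" using k' by auto
    then show ?case using cp sG k'(3) by simp
  qed
  then show ?thesis unfolding G_def by blast
qed

lemma part1:
  assumes c: "coderivation D" and fe: "finitely_expandable D" and wp: "weakly_progressing D"
    and b: "inf_branch D b"
  shows "\<exists>n. nwf_box_at D (b n) \<and> (\<forall>m. b (n + m) = b n @ replicate m 2)"
proof -
  obtain n1 where h: "\<forall>m. is_cp (rl D (b (n1+m))) \<and> b (Suc (n1+m)) = b (n1+m) @ [2]"
    using wp_box[OF assms] by blast
  have r: "b (n1 + m) = b n1 @ replicate m 2" for m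
  proof (induct m)
    case (Suc m)
    then show ?case using h[rule_format, of m] by (simp add: replicate_append_same)
  qed simp
  then show ?thesis using h unfolding nwf_box_at_def by (metis r)
qed


lemma prog_wp:
  assumes c: "coderivation D" and p: "progressing D"
  shows "weakly_progressing D"
  unfolding weakly_progressing_def
proof (intro allI impI)
  fix b assume b: "inf_branch D b"
  obtain n0 j where th: "bang_thread D b n0 j" and inf: "infinite {n. n0 \<le> n \<and> is_cp (rl D (b n))}"
    using p b unfolding progressing_def by blast
  define f where "f n = size (seqt D (b n) ! j n)" for n
  define P where "P n = (is_cp (rl D (b n)) \<and> b (Suc n) = b n @ [1])" for n
  have st: "f (Suc n) \<le> f n \<and> (P n \<longrightarrow> f (Suc n) < f n)" if "n \<ge> n0" for n
  proof -
    obtain k Ps where k: "1 \<le> k" "k \<le> arity (rl D (b n))" "b (Suc n) = b n @ [k]"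
      "valid_step (rl D (b n)) (seqt D (b n)) Ps" "Ps!(k-1) = seqt D (b (Suc n))"
      using branch_step[OF c b] by blast
    have t0: "j n < length (seqt D (b n)) \<and> is_bang (seqt D (b n) ! j n) \<and>
        parent (rl D (b n)) (length (seqt D (b n))) (last (b (Suc n))) (j (Suc n)) = Some (j n)"
      "j (Suc n) < length (seqt D (b (Suc n)))"
      using th that unfolding bang_thread_def by auto
    have t1: "parent (rl D (b n)) (length (seqt D (b n))) k (j (Suc n)) = Some (j n)"
      "is_bang (seqt D (b n) ! j n)"
      using t0 k(3) by auto
    have t2: "j (Suc n) < length (Ps!(k-1))"
      using t0 k(5) by auto
    have "P n \<longleftrightarrow> is_cp (rl D (b n)) \<and> k = 1" using k(3) unfolding P_def by auto
    then show ?thesis using size_step[OF k(4) k(1,2) t2 t1] k(5) unfolding f_def by auto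
  qed
  have fin: "finite {n. n0 \<le> n \<and> P n}" by (rule fin_decr[where f=f]) (use st in auto)
  have sub: "{n. n0 \<le> n \<and> is_cp (rl D (b n))} \<subseteq>
       {n. n0 \<le> n \<and> P n} \<union> {n. is_cp (rl D (b n)) \<and> b (Suc n) = b n @ [2]}"
  proof
    fix n assume n: "n \<in> {n. n0 \<le> n \<and> is_cp (rl D (b n))}"
    obtain k where k: "1 \<le> k" "k \<le> arity (rl D (b n))" "b (Suc n) = b n @ [k]"
      using b unfolding inf_branch_def by blast
    have "arity (rl D (b n)) = 2" using n by (cases "rl D (b n)") auto
    then have "k = 1 \<or> k = 2" using k by auto
    then show "n \<in> {n. n0 \<le> n \<and> P n} \<union> {n. is_cp (rl D (b n)) \<and> b (Suc n) = b n @ [2]}"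
      using n k unfolding P_def by auto
  qed
  show "infinite {n. is_cp (rl D (b n)) \<and> b (Suc n) = b n @ [2]}"
    using inf fin sub by (meson finite_UnI finite_subset)
qed

lemma wp_prog:
  assumes c: "coderivation D" and fe: "finitely_expandable D" and wp: "weakly_progressing D"
  shows "progressing D"
  unfolding progressing_def
proof (intro allI impI)
  fix b assume b: "inf_branch D b"
  obtain n1 where h: "\<forall>m. is_cp (rl D (b (n1+m))) \<and> b (Suc (n1+m)) = b (n1+m) @ [2]
              \<and> seqt D (b (n1+m)) = seqt D (b n1)"
    using wp_box[OF c fe wp b] by blast
  define G where "G = seqt D (b n1)"
  obtain i where i: "rl D (b n1) = RCp i" using h[rule_format, of 0]
    by (cases "rl D (b n1)") auto
  obtain k Ps where "valid_step (rl D (b n1)) (seqt D (b n1)) Ps"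
    using branch_step[OF c b] by blast
  then have iG: "i < length G" "is_bang (G ! i)" using i unfolding G_def by auto
  define T where "T n0 = (\<exists>j. \<forall>n\<ge>n0. j n < length (seqt D (b n)) \<and> is_bang (seqt D (b n) ! j n) \<and>
        parent (rl D (b n)) (length (seqt D (b n))) (last (b (Suc n))) (j (Suc n)) = Some (j n))" for n0
  have Tn1: "T n1" unfolding T_def
  proof (intro exI[of _ "\<lambda>_. i"] allI impI)
    fix n assume "n1 \<le> n"
    then obtain m where m: "n = n1 + m" using le_Suc_ex by blast
    obtain i' where "rl D (b n) = RCp i'" using h[rule_format, of m] m
      by (cases "rl D (b n)") auto
    then show "i < length (seqt D (b n)) \<and> is_bang (seqt D (b n) ! i) \<and>
        parent (rl D (b n)) (length (seqt D (b n))) (last (b (Suc n))) i = Some i"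
      using h[rule_format, of m] m iG unfolding G_def by auto
  qed
  define n0 where "n0 = (LEAST n. T n)"
  have Tn0: "T n0" unfolding n0_def using Tn1 by (rule LeastI)
  have n01: "n0 \<le> n1" unfolding n0_def using Tn1 by (rule Least_le)
  obtain j where j: "\<forall>n\<ge>n0. j n < length (seqt D (b n)) \<and> is_bang (seqt D (b n) ! j n) \<and>
        parent (rl D (b n)) (length (seqt D (b n))) (last (b (Suc n))) (j (Suc n)) = Some (j n)"
    using Tn0 unfolding T_def by blast
  have "bang_thread D b n0 j"
    unfolding bang_thread_def
  proof (intro conjI)
    show "\<forall>n\<ge>n0. j n < length (seqt D (b n)) \<and> is_bang (seqt D (b n) ! j n) \<and>
        parent (rl D (b n)) (length (seqt D (b n))) (last (b (Suc n))) (j (Suc n)) = Some (j n)"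
      using j .
    show "n0 = 0 \<or> (\<forall>m. parent (rl D (b (n0 - 1))) (length (seqt D (b (n0 - 1)))) (last (b n0)) (j n0) = Some m
             \<longrightarrow> \<not> (m < length (seqt D (b (n0 - 1))) \<and> is_bang (seqt D (b (n0 - 1)) ! m)))"
    proof (rule ccontr)
      assume "\<not> ?thesis"
      then obtain m where n0p: "n0 > 0" and
        pm: "parent (rl D (b (n0 - 1))) (length (seqt D (b (n0 - 1)))) (last (b n0)) (j n0) = Some m"
        "m < length (seqt D (b (n0 - 1)))" "is_bang (seqt D (b (n0 - 1)) ! m)" by auto
      define j' where "j' = j(n0 - 1 := m)"
      have "T (n0 - 1)" unfolding T_def
      proof (intro exI[of _ j'] allI impI)
        fix n assume n: "n0 - 1 \<le> n"
        show "j' n < length (seqt D (b n)) \<and> is_bang (seqt D (b n) ! j' n) \<and>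
          parent (rl D (b n)) (length (seqt D (b n))) (last (b (Suc n))) (j' (Suc n)) = Some (j' n)"
        proof (cases "n = n0 - 1")
          case True
          then show ?thesis using pm n0p unfolding j'_def by auto
        next
          case False
          then have "n \<ge> n0" using n by auto
          then show ?thesis using j False unfolding j'_def by auto
        qed
      qed
      moreover have "n0 - 1 < n0" using n0p by auto
      ultimately show False unfolding n0_def by (meson not_less_Least)
    qed
  qed
  moreover have "infinite {n. n0 \<le> n \<and> is_cp (rl D (b n))}"
  proof -
    have "{n1..} \<subseteq> {n. n0 \<le> n \<and> is_cp (rl D (b n))}"
    proof
      fix n assume "n \<in> {n1..}"
      then obtain m where "n = n1 + m" using le_Suc_ex by auto
      then show "n \<in> {n. n0 \<le> n \<and> is_cp (rl D (b n))}" using h n01 by auto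
    qed
    then show ?thesis using infinite_Ici finite_subset by blast
  qed
  ultimately show "\<exists>n0 j. bang_thread D b n0 j \<and> infinite {n. n0 \<le> n \<and> is_cp (rl D (b n))}"
    by blast
qed

theorem mainTheorem7:
  assumes "coderivation D"
    and "finitely_expandable D"
  shows "(weakly_progressing D \<longrightarrow>
            (\<forall>b. inf_branch D b \<longrightarrow>
               (\<exists>n. nwf_box_at D (b n) \<and> (\<forall>m. b (n + m) = b n @ replicate m 2))))
         \<and> (progressing D \<longleftrightarrow> weakly_progressing D)"
  using part1[OF assms] prog_wp[OF assms(1)] wp_prog[OF assms] by blast

end
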